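(* Let $(K,C,S)$ and $(K',C',S')$ be the associated layered simplicial complexes of divided simplicial complexes, and suppose that the polyhedra $X=|K|$ and $X'=|K'|$ are filtered spaces with respective singular sets $\Sigma=|S|$ and $\Sigma'=|S'|$ whose formal codimensions coincide, $\operatorname{codim}_X\Sigma=\operatorname{codim}_{X'}\Sigma'$. If there exists a layered formal deformation between $(K,C,S)$ and $(K',C',S')$, then $(X,\Sigma)$ and $(X',\Sigma')$ are stratified homotopy equivalent.
   Context: A simplicial complex $K$ is a set of finite nonempty sets (simplices) such that every nonempty subset (face) of a simplex of $K$ lies in $K$; $\dim s=|s|-1$; $K^0$ is the set of vertices; $t<s$ means $t$ is a proper face of $s$; $|K|$ is the geometric realization (polyhedron). A simplex is principal in $K$ if it is not a proper face of any simplex of $K$. A simplex $s$ is free in $K$ if it is a proper face of a principal simplex $p$ of $K$ and of no other simplex of $K$. A layered simplicial complex is a triple $(K,C,S)$ where $C,S$ are disjoint subcomplexes of $K$; its intermediate simplices $\mathrm{IM}(K,C,S)$ are the simplices of $K$ lying in neither $C$ nor $S$. A divided simplicial complex is a pair $(K,S^0)$ with $S^0\subseteq K^0$; its associated layered complex is $(K,C,S)$, where $S$ consists of the simplices all of whose vertices lie in $S^0$ and $C$ of those all of whose vertices lie in $K^0-S^0$. An elementary $S$-collapse of $(K,C,S)$ replaces it by $(K-\{s,p\},C,S-\{s,p\})$, where $p\in S$ is principal in $K$ and $s$ is a face of $p$ free in $K$; an elementary $C$-collapse is defined symmetrically with $p\in C$ (giving $(K-\{s,p\},C-\{s,p\},S)$).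 If $(K,C,S)$ is associated to a divided complex $(K,S^0)$, an elementary intermediate collapse replaces it by $(K-\{s,p\},C,S)$, where (i) $p\in\mathrm{IM}(K,C,S)$, (ii) $p$ is principal in $K$, (iii) $s$ is a face of $p$ free in $K$, (iv) every simplex $t\in S$ with $t<p$ satisfies $t<s$. An elementary layered collapse between layered complexes associated to divided complexes is an elementary $S$-, $C$- or intermediate collapse; its inverse is an elementary layered expansion. A layered formal deformation from $(K,C,S)$ to $(K',C',S')$ is a finite sequence of layered complexes starting at $(K,C,S)$ and ending at $(K',C',S')$, each obtained from the previous one by an elementary layered collapse or an elementary layered expansion. A filtered space here is a pair $(X,\Sigma)$ of a Hausdorff space $X$ and closed subset $\Sigma$ (the singular set), together with a formal dimension $n$ of $X$ and a formal codimension $\operatorname{codim}_X\Sigma=k\geq 1$ (i.e. the filtration $X=X_n\supset X_{n-1}=\dots=X_{n-k}=\Sigma\supset X_{n-k-1}=\dots=\emptyset$). A stratified map $f:(X,\Sigma_X)\to(Y,\Sigma_Y)$ is a continuous map with $f(\Sigma_X)\subseteq\Sigma_Y$ and $f(X-\Sigma_X)\subseteq Y-\Sigma_Y$; it is codimension-preserving if $\operatorname{codim}\Sigma_X=\operatorname{codim}\Sigma_Y$. A stratified homotopy is a stratified map $(X\times I,\Sigma_X\times I)\to(Y,\Sigma_Y)$, $I=[0,1]$. A stratified homotopy equivalence is a codimension-preserving stratified map $f$ for which there is a stratified map $g:(Y,\Sigma_Y)\to(X,\Sigma_X)$ such that $g\circ f$ and $f\circ g$ are stratified homotopic to the identities.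 *)

theory Defs
  imports "HOL-Analysis.Analysis"
begin

definition simplicial_complex :: "'v set set \<Rightarrow> bool" where
  "simplicial_complex K \<longleftrightarrow>
     (\<forall>s\<in>K. finite s \<and> s \<noteq> {}) \<and> (\<forall>s\<in>K. \<forall>t. t \<subseteq> s \<and> t \<noteq> {} \<longrightarrow> t \<in> K)"

definition vertices :: "'v set set \<Rightarrow> 'v set" where
  "vertices K = \<Union>K"

definition principal :: "'v set set \<Rightarrow> 'v set \<Rightarrow> bool" where
  "principal K p \<longleftrightarrow> p \<in> K \<and> \<not> (\<exists>q\<in>K. p \<subset> q)"

definition free_simplex :: "'v set set \<Rightarrow> 'v set \<Rightarrow> bool" where
  "free_simplex K s \<longleftrightarrow> s \<in> K \<and>
     (\<exists>p. principal K p \<and> s \<subset> p \<and> (\<forall>q\<in>K. s \<subset> q \<longrightarrow> q = p))"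

text \<open>Geometric realization: points are barycentric coordinate functions, topologised
  as a subspace of the product space 'v => real.\<close>
definition realization :: "'v set set \<Rightarrow> ('v \<Rightarrow> real) set" where
  "realization K = (\<Union>s\<in>K. {x. (\<forall>v. 0 \<le> x v) \<and> (\<forall>v. v \<notin> s \<longrightarrow> x v = 0) \<and> sum x s = 1})"

type_synonym 'v layered = "'v set set \<times> 'v set set \<times> 'v set set"

definition divided :: "'v set set \<Rightarrow> 'v set \<Rightarrow> bool" where
  "divided K S0 \<longleftrightarrow> simplicial_complex K \<and> finite K \<and> S0 \<subseteq> vertices K"

definition S_part :: "'v set set \<Rightarrow> 'v set \<Rightarrow> 'v set set" where
  "S_part K S0 = {s \<in> K. s \<subseteq> S0}"

definition C_part :: "'v set set \<Rightarrow> 'v set \<Rightarrow> 'v set set" where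
  "C_part K S0 = {s \<in> K. s \<subseteq> vertices K - S0}"

definition assoc_layered :: "'v set set \<Rightarrow> 'v set \<Rightarrow> 'v layered" where
  "assoc_layered K S0 = (K, C_part K S0, S_part K S0)"

definition is_assoc_layered :: "'v layered \<Rightarrow> bool" where
  "is_assoc_layered L \<longleftrightarrow> (\<exists>K S0. divided K S0 \<and> L = assoc_layered K S0)"

definition elem_S_collapse :: "'v layered \<Rightarrow> 'v layered \<Rightarrow> bool" where
  "elem_S_collapse L L' \<longleftrightarrow> (case L of (K, C, S) \<Rightarrow>
     (\<exists>s p. p \<in> S \<and> principal K p \<and> s \<subset> p \<and> free_simplex K s \<and>
        L' = (K - {s, p}, C, S - {s, p})))"

definition elem_C_collapse :: "'v layered \<Rightarrow> 'v layered \<Rightarrow> bool" where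
  "elem_C_collapse L L' \<longleftrightarrow> (case L of (K, C, S) \<Rightarrow>
     (\<exists>s p. p \<in> C \<and> principal K p \<and> s \<subset> p \<and> free_simplex K s \<and>
        L' = (K - {s, p}, C - {s, p}, S)))"

definition elem_intermediate_collapse :: "'v layered \<Rightarrow> 'v layered \<Rightarrow> bool" where
  "elem_intermediate_collapse L L' \<longleftrightarrow> (case L of (K, C, S) \<Rightarrow>
     (\<exists>s p. p \<in> K \<and> p \<notin> C \<and> p \<notin> S \<and> principal K p \<and> s \<subset> p \<and> free_simplex K s \<and>
        (\<forall>t\<in>S. t \<subset> p \<longrightarrow> t \<subset> s) \<and>
        L' = (K - {s, p}, C, S)))"

definition elem_layered_collapse :: "'v layered \<Rightarrow> 'v layered \<Rightarrow> bool" where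
  "elem_layered_collapse L L' \<longleftrightarrow> is_assoc_layered L \<and> is_assoc_layered L' \<and>
     (elem_S_collapse L L' \<or> elem_C_collapse L L' \<or> elem_intermediate_collapse L L')"

definition layered_formal_deformation :: "'v layered \<Rightarrow> 'v layered \<Rightarrow> bool" where
  "layered_formal_deformation L L' \<longleftrightarrow>
     (\<exists>xs. xs \<noteq> [] \<and> hd xs = L \<and> last xs = L' \<and>
        (\<forall>i. Suc i < length xs \<longrightarrow>
           elem_layered_collapse (xs ! i) (xs ! Suc i) \<or> elem_layered_collapse (xs ! Suc i) (xs ! i)))"

text \<open>Filtered space (X, Sigma) with formal dimension n and formal codimension k of Sigma
  (Hausdorffness is automatic for subspaces of the product space 'v => real).\<close>
definition filtered_space :: "'a::topological_space set \<Rightarrow> 'a set \<Rightarrow> int \<Rightarrow> int \<Rightarrow> bool" where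
  "filtered_space X \<Sigma> n k \<longleftrightarrow> \<Sigma> \<subseteq> X \<and> closedin (top_of_set X) \<Sigma> \<and> 1 \<le> k"

definition stratified_map ::
  "'a::topological_space set \<Rightarrow> 'a set \<Rightarrow> 'b::topological_space set \<Rightarrow> 'b set \<Rightarrow> ('a \<Rightarrow> 'b) \<Rightarrow> bool" where
  "stratified_map X \<Sigma>X Y \<Sigma>Y f \<longleftrightarrow> continuous_on X f \<and> f ` X \<subseteq> Y \<and>
     f ` \<Sigma>X \<subseteq> \<Sigma>Y \<and> f ` (X - \<Sigma>X) \<subseteq> Y - \<Sigma>Y"

definition stratified_homotopic ::
  "'a::topological_space set \<Rightarrow> 'a set \<Rightarrow> 'b::topological_space set \<Rightarrow> 'b set \<Rightarrow>
   ('a \<Rightarrow> 'b) \<Rightarrow> ('a \<Rightarrow> 'b) \<Rightarrow> bool" where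
  "stratified_homotopic X \<Sigma>X Y \<Sigma>Y f g \<longleftrightarrow>
     (\<exists>h. stratified_map (X \<times> {0..1::real}) (\<Sigma>X \<times> {0..1}) Y \<Sigma>Y h \<and>
        (\<forall>x\<in>X. h (x, 0) = f x \<and> h (x, 1) = g x))"

definition stratified_homotopy_equivalence ::
  "'a::topological_space set \<Rightarrow> 'a set \<Rightarrow> int \<Rightarrow> 'b::topological_space set \<Rightarrow> 'b set \<Rightarrow> int \<Rightarrow>
   ('a \<Rightarrow> 'b) \<Rightarrow> bool" where
  "stratified_homotopy_equivalence X \<Sigma>X kX Y \<Sigma>Y kY f \<longleftrightarrow>
     kX = kY \<and> stratified_map X \<Sigma>X Y \<Sigma>Y f \<and>
     (\<exists>g. stratified_map Y \<Sigma>Y X \<Sigma>X g \<and>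
        stratified_homotopic X \<Sigma>X X \<Sigma>X (g \<circ> f) id \<and>
        stratified_homotopic Y \<Sigma>Y Y \<Sigma>Y (f \<circ> g) id)"

definition stratified_homotopy_equivalent ::
  "'a::topological_space set \<Rightarrow> 'a set \<Rightarrow> int \<Rightarrow> 'b::topological_space set \<Rightarrow> 'b set \<Rightarrow> int \<Rightarrow> bool" where
  "stratified_homotopy_equivalent X \<Sigma>X kX Y \<Sigma>Y kY \<longleftrightarrow>
     (\<exists>f. stratified_homotopy_equivalence X \<Sigma>X kX Y \<Sigma>Y kY f)"

end

theory Submission
  imports Defs
begin

definition P_str :: "'a::topological_space set \<Rightarrow> 'a set \<Rightarrow> 'b::topological_space set \<Rightarrow> 'b set \<Rightarrow> ('a \<Rightarrow> 'b) \<Rightarrow> bool" where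
  "P_str A SA B SB k \<longleftrightarrow> k ` SA \<subseteq> SB \<and> k ` (A - SA) \<subseteq> B - SB"

lemma top_prod_eq: "prod_topology (top_of_set A) (top_of_set B) = top_of_set (A \<times> B)"
  by (metis prod_topology_euclidean subtopology_Times)

lemma P_str_cong:
  assumes "SX \<subseteq> X" "\<And>x. x \<in> X \<Longrightarrow> h x = k x"
  shows "P_str X SX Y SY h \<longleftrightarrow> P_str X SX Y SY k"
proof -
  have "h ` SX = k ` SX" using assms by (intro image_cong) auto
  moreover have "h ` (X - SX) = k ` (X - SX)" using assms by (intro image_cong) auto
  ultimately show ?thesis unfolding P_str_def by simp
qed

lemma strat_hom_to:
  assumes "SX \<subseteq> X" "stratified_homotopic X SX Y SY f g"
  shows "homotopic_with_canon (P_str X SX Y SY) X Y f g"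
proof -
  obtain h where h: "stratified_map (X \<times> {0..1::real}) (SX \<times> {0..1}) Y SY h"
     "\<forall>x\<in>X. h (x, 0) = f x \<and> h (x, 1) = g x"
    using assms(2) unfolding stratified_homotopic_def by blast
  have hc: "continuous_on (X \<times> {0..1}) h" and hY: "h ` (X \<times> {0..1}) \<subseteq> Y"
    and hS: "h ` (SX \<times> {0..1}) \<subseteq> SY" and hN: "h ` (X \<times> {0..1} - SX \<times> {0..1}) \<subseteq> Y - SY"
    using h(1) unfolding stratified_map_def by blast+
  let ?k = "h \<circ> prod.swap"
  have kc: "continuous_on ({0..1} \<times> X) ?k"
    by (intro continuous_on_compose continuous_intros) (auto intro: continuous_on_subset[OF hc])
  have hw: "homotopic_with (P_str X SX Y SY) (top_of_set X) (top_of_set Y) f g \<longleftrightarrow>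
           (\<exists>h. continuous_map (prod_topology (top_of_set {0..1::real}) (top_of_set X)) (top_of_set Y) h \<and>
              (\<forall>x \<in> topspace (top_of_set X). h(0,x) = f x) \<and>
              (\<forall>x \<in> topspace (top_of_set X). h(1,x) = g x) \<and>
              (\<forall>t \<in> {0..1}. P_str X SX Y SY (\<lambda>x. h(t, x))))"
    apply (rule Homotopy.homotopic_with[where P="P_str X SX Y SY" and X="top_of_set X" and Y="top_of_set Y"])
    by (rule P_str_cong[OF assms(1)]) auto
  have b1: "continuous_map (prod_topology (top_of_set {0..1::real}) (top_of_set X)) (top_of_set Y) ?k"
    unfolding top_prod_eq using kc hY by auto
  have b2: "P_str X SX Y SY (\<lambda>x. ?k(t, x))" if "t \<in> {0..1}" for t
  proof -
    have "(\<lambda>x. ?k(t, x)) ` SX \<subseteq> SY" using hS that by (auto simp: image_subset_iff)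
    moreover have "(\<lambda>x. ?k(t, x)) ` (X - SX) \<subseteq> Y - SY" using hN that
      unfolding Times_Diff_distrib1[symmetric] image_subset_iff by simp
    ultimately show ?thesis unfolding P_str_def by blast
  qed
  show ?thesis unfolding hw
    by (rule exI[of _ ?k]) (use b1 b2 h(2) in auto)
qed

lemma strat_hom_from:
  assumes "SX \<subseteq> X" "homotopic_with_canon (P_str X SX Y SY) X Y f g"
  shows "stratified_homotopic X SX Y SY f g"
proof -
  obtain k where k: "continuous_map (prod_topology (top_of_set {0..1::real}) (top_of_set X)) (top_of_set Y) k"
     "\<forall>x. k(0,x) = f x" "\<forall>x. k(1,x) = g x" "\<forall>t \<in> {0..1}. P_str X SX Y SY (\<lambda>x. k(t, x))"
    using assms(2) unfolding homotopic_with_def by blast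
  have kc: "continuous_on ({0..1} \<times> X) k" and kY: "k ` ({0..1} \<times> X) \<subseteq> Y"
    using k(1) unfolding top_prod_eq by auto
  let ?h = "k \<circ> prod.swap"
  have hc: "continuous_on (X \<times> {0..1}) ?h"
    by (intro continuous_on_compose continuous_intros) (auto intro: continuous_on_subset[OF kc])
  have a1: "?h ` (X \<times> {0..1}) \<subseteq> Y" using kY by auto
  have a2: "?h ` (SX \<times> {0..1}) \<subseteq> SY" using k(4) unfolding P_str_def image_subset_iff by auto
  have a3: "?h ` (X \<times> {0..1} - SX \<times> {0..1}) \<subseteq> Y - SY" using k(4)
    unfolding P_str_def image_subset_iff Times_Diff_distrib1[symmetric] by force
  have a4: "\<forall>x\<in>X. ?h (x, 0) = f x \<and> ?h (x, 1) = g x" using k(2,3) by simp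
  show ?thesis unfolding stratified_homotopic_def stratified_map_def
    by (rule exI[of _ ?h]) (intro conjI hc a1 a2 a3 a4)
qed


lemma strat_hom_iff:
  assumes "SX \<subseteq> X"
  shows "stratified_homotopic X SX Y SY f g \<longleftrightarrow> homotopic_with_canon (P_str X SX Y SY) X Y f g"
  using strat_hom_to strat_hom_from assms by blast

definition SHE :: "'a::topological_space set \<Rightarrow> 'a set \<Rightarrow> 'b::topological_space set \<Rightarrow> 'b set \<Rightarrow> bool" where
  "SHE X SX Y SY \<longleftrightarrow> SX \<subseteq> X \<and> SY \<subseteq> Y \<and> (\<exists>f g. stratified_map X SX Y SY f \<and> stratified_map Y SY X SX g \<and>
     stratified_homotopic X SX X SX (g \<circ> f) id \<and> stratified_homotopic Y SY Y SY (f \<circ> g) id)"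

lemma SHE_sym: "SHE X SX Y SY \<Longrightarrow> SHE Y SY X SX"
  unfolding SHE_def by blast

lemma smap_cont: "stratified_map X SX Y SY f \<Longrightarrow> continuous_map (top_of_set X) (top_of_set Y) f"
  unfolding stratified_map_def by (auto simp: image_subset_iff)

lemma P_str_right: "P_str B SB C SC j \<Longrightarrow> stratified_map A SA B SB f \<Longrightarrow> P_str A SA C SC (j \<circ> f)"
  unfolding P_str_def stratified_map_def by (auto simp: image_subset_iff)

lemma P_str_left: "P_str A SA B SB j \<Longrightarrow> stratified_map B SB C SC g \<Longrightarrow> P_str A SA C SC (g \<circ> j)"
  unfolding P_str_def stratified_map_def by (auto simp: image_subset_iff)

lemma smap_comp:
  assumes f: "stratified_map A SA B SB f" and g: "stratified_map B SB C SC g"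
  shows "stratified_map A SA C SC (g \<circ> f)"
proof -
  have fc: "continuous_on A f" "f ` A \<subseteq> B" "f ` SA \<subseteq> SB" "f ` (A - SA) \<subseteq> B - SB"
    using f unfolding stratified_map_def by blast+
  have gc: "continuous_on B g" "g ` B \<subseteq> C" "g ` SB \<subseteq> SC" "g ` (B - SB) \<subseteq> C - SC"
    using g unfolding stratified_map_def by blast+
  have "continuous_on A (g \<circ> f)"
    by (rule continuous_on_compose[OF fc(1) continuous_on_subset[OF gc(1) fc(2)]])
  moreover have "(g \<circ> f) ` A \<subseteq> C" using fc(2) gc(2) by (auto simp: image_comp[symmetric])
  moreover have "(g \<circ> f) ` SA \<subseteq> SC" using fc(3) gc(3) by (auto simp: image_comp[symmetric])
  moreover have "(g \<circ> f) ` (A - SA) \<subseteq> C - SC" using fc(4) gc(4) by (auto simp: image_comp[symmetric])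
  ultimately show ?thesis unfolding stratified_map_def by blast
qed

lemma hom_chain:
  assumes SX: "SX \<subseteq> X" and SY: "SY \<subseteq> Y"
    and f1: "stratified_map X SX Y SY f1" and g1: "stratified_map Y SY X SX g1"
    and h1: "stratified_homotopic X SX X SX (g1 \<circ> f1) id"
    and h2: "stratified_homotopic Y SY Y SY (g2 \<circ> f2) id"
  shows "stratified_homotopic X SX X SX ((g1 \<circ> g2) \<circ> (f2 \<circ> f1)) id"
proof -
  have a: "homotopic_with_canon (P_str Y SY Y SY) Y Y (g2 \<circ> f2) id"
    using h2 SY strat_hom_iff by blast
  have b: "homotopic_with_canon (P_str X SX Y SY) X Y ((g2 \<circ> f2) \<circ> f1) (id \<circ> f1)"
    by (rule homotopic_with_compose_continuous_map_right[OF a smap_cont[OF f1]])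
       (rule P_str_right[OF _ f1])
  have c: "homotopic_with_canon (P_str X SX X SX) X X (g1 \<circ> ((g2 \<circ> f2) \<circ> f1)) (g1 \<circ> (id \<circ> f1))"
    by (rule homotopic_with_compose_continuous_map_left[OF b smap_cont[OF g1]])
       (rule P_str_left[OF _ g1])
  have c': "homotopic_with_canon (P_str X SX X SX) X X ((g1 \<circ> g2) \<circ> (f2 \<circ> f1)) (g1 \<circ> f1)"
    using c by (simp add: o_assoc)
  have d: "homotopic_with_canon (P_str X SX X SX) X X (g1 \<circ> f1) id"
    using h1 SX strat_hom_iff by blast
  have "homotopic_with_canon (P_str X SX X SX) X X ((g1 \<circ> g2) \<circ> (f2 \<circ> f1)) id"
    by (rule homotopic_with_trans[OF c' d])
  then show ?thesis using SX strat_hom_iff by blast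
qed

lemma SHE_trans: "SHE X SX Y SY \<Longrightarrow> SHE Y SY Z SZ \<Longrightarrow> SHE X SX Z SZ"
proof -
  assume A: "SHE X SX Y SY" and B: "SHE Y SY Z SZ"
  then obtain f1 g1 f2 g2 where SX: "SX \<subseteq> X" and SY: "SY \<subseteq> Y" and SZ: "SZ \<subseteq> Z"
    and f1: "stratified_map X SX Y SY f1" and g1: "stratified_map Y SY X SX g1"
    and h1: "stratified_homotopic X SX X SX (g1 \<circ> f1) id" and h1': "stratified_homotopic Y SY Y SY (f1 \<circ> g1) id"
    and f2: "stratified_map Y SY Z SZ f2" and g2: "stratified_map Z SZ Y SY g2"
    and h2: "stratified_homotopic Y SY Y SY (g2 \<circ> f2) id" and h2': "stratified_homotopic Z SZ Z SZ (f2 \<circ> g2) id"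
    using A B unfolding SHE_def by (elim conjE exE) (rule that, assumption+)
  show ?thesis unfolding SHE_def
    apply (intro conjI SX SZ exI[of _ "f2 \<circ> f1"] exI[of _ "g1 \<circ> g2"])
       apply (rule smap_comp[OF f1 f2])
      apply (rule smap_comp[OF g2 g1])
     apply (rule hom_chain[OF SX SY f1 g1 h1 h2])
    apply (rule hom_chain[OF SZ SY g2 f2 h2' h1'])
    done
qed

definition supp :: "('v \<Rightarrow> real) \<Rightarrow> 'v set" where "supp x = {v. x v \<noteq> 0}"

lemma real_D:
  assumes K: "simplicial_complex K" and x: "x \<in> realization K"
  shows "(\<forall>v. 0 \<le> x v) \<and> supp x \<in> K \<and> sum x (supp x) = 1"
proof -
  obtain q where q: "q \<in> K" "\<forall>v. 0 \<le> x v" "\<forall>v. v \<notin> q \<longrightarrow> x v = 0" "sum x q = 1"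
    using x unfolding realization_def by blast
  have fq: "finite q" using K q(1) unfolding simplicial_complex_def by blast
  have sub: "supp x \<subseteq> q" using q(3) unfolding supp_def by blast
  have sumeq: "sum x (supp x) = sum x q"
    by (rule sum.mono_neutral_left[OF fq sub]) (auto simp: supp_def)
  have ne: "supp x \<noteq> {}" using sumeq q(4) by auto
  have "supp x \<in> K" using K q(1) sub ne unfolding simplicial_complex_def by blast
  then show ?thesis using q(2,4) sumeq by simp
qed

lemma real_I:
  assumes "\<forall>v. 0 \<le> x v" "supp x \<in> K" "sum x (supp x) = 1"
  shows "x \<in> realization K"
  unfolding realization_def using assms by (auto simp: supp_def)

lemma real_iff:
  assumes K: "simplicial_complex K"
  shows "x \<in> realization K \<longleftrightarrow> (\<forall>v. 0 \<le> x v) \<and> supp x \<in> K \<and> sum x (supp x) = 1"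
  using real_D[OF K] real_I by blast

lemma real_mono: "K' \<subseteq> K \<Longrightarrow> realization K' \<subseteq> realization K"
  unfolding realization_def by blast

lemma sc_S_part: "simplicial_complex K \<Longrightarrow> simplicial_complex (S_part K S0)"
  unfolding simplicial_complex_def S_part_def by blast

lemma real_S_part:
  assumes K: "simplicial_complex K"
  shows "x \<in> realization (S_part K S0) \<longleftrightarrow> x \<in> realization K \<and> supp x \<subseteq> S0"
  using real_iff[OF K] real_iff[OF sc_S_part[OF K]] unfolding S_part_def by auto

lemma continuous_on_Min_fun:
  fixes f :: "'a::topological_space \<Rightarrow> 'b \<Rightarrow> real"
  assumes "finite A" "A \<noteq> {}" "\<And>v. v \<in> A \<Longrightarrow> continuous_on U (\<lambda>x. f x v)"
  shows "continuous_on U (\<lambda>x. Min ((f x) ` A))"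
  using assms
proof (induction A rule: finite_ne_induct)
  case (singleton a) then show ?case by simp
next
  case (insert a A)
  have "continuous_on U (\<lambda>x. min (f x a) (Min ((f x) ` A)))"
    using insert by (intro continuous_intros) auto
  moreover have "Min ((f x) ` insert a A) = min (f x a) (Min ((f x) ` A))" for x
    using insert by (simp add: Min_insert)
  ultimately show ?case by simp
qed

lemma collapse_SHE:
  fixes K K' S' :: "'v set set" and s p S00 :: "'v set"
  assumes K: "simplicial_complex K" and K': "simplicial_complex K'" and KK': "K' = K - {s,p}"
    and pK: "p \<in> K" and sp: "s \<subset> p" and free: "\<forall>q\<in>K. s \<subset> q \<longrightarrow> q = p" and sK: "s \<in> K"
    and S'sc: "simplicial_complex S'" and S'K': "S' \<subseteq> K'" and S'eq: "\<forall>q\<in>K'. q \<in> S' \<longleftrightarrow> q \<subseteq> S00"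
    and cond: "p \<subseteq> S00 \<or> (\<not> s \<subseteq> S00 \<and> \<not> (p - s) \<subseteq> S00)"
  shows "SHE (realization K) (realization (S_part K S00)) (realization K') (realization S')"
proof -
  have fp: "finite p" and sne: "s \<noteq> {}" using K pK sK unfolding simplicial_complex_def by blast+
  have fs: "finite s" using fp sp finite_subset by auto
  have psne: "p - s \<noteq> {}" using sp by auto
  have cps: "card (p - s) > 0" using psne fp by auto
  define m where "m = (\<lambda>x::'v\<Rightarrow>real. Min (x ` s))"
  define c where "c = real (card s) / real (card (p - s))"
  have c_pos: "c > 0" using cps fs sne by (simp add: c_def card_gt_0_iff)
  have c_card: "real (card (p - s)) * c = real (card s)" using cps by (simp add: c_def)
  define h where "h = (\<lambda>(x::'v\<Rightarrow>real,t::real). \<lambda>v. if v \<in> s then x v - t * m x else if v \<in> p then x v + t * c * m x else x v)"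
  let ?X = "realization K" and ?X' = "realization K'" and ?S = "realization (S_part K S00)" and ?S' = "realization S'"
  have m_le: "m x \<le> x v" if "v \<in> s" for x v using that fs by (simp add: m_def)
  have m_in: "\<exists>v\<in>s. x v = m x" for x
  proof -
    have "m x \<in> x ` s" unfolding m_def using fs sne by (intro Min_in) auto
    then show ?thesis by force
  qed
  have m_nn: "0 \<le> m x" if "x \<in> ?X" for x
    using m_in[of x] real_D[OF K that] by metis
  have h0: "h (x, 0) = x" for x by (auto simp: h_def)
  have hz: "m x = 0 \<Longrightarrow> h (x, t) = x" for x t by (auto simp: h_def)
  have K'sub: "K' \<subseteq> K" using KK' by auto
  have XX': "?X' \<subseteq> ?X" by (rule real_mono[OF K'sub])
  have supp_sp: "supp x = s \<or> supp x = p" if x: "x \<in> ?X" and mp: "m x > 0" for x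
  proof -
    have "s \<subseteq> supp x" using m_le[of _ x] mp unfolding supp_def by force
    moreover have "supp x \<in> K" using real_D[OF K x] by blast
    ultimately have "s \<subset> supp x \<or> supp x = s" "supp x \<in> K" by auto
    then show ?thesis using free by metis
  qed
  have supp_p: "supp x \<subseteq> p" if "x \<in> ?X" "m x > 0" for x using supp_sp[OF that] sp by auto
  have X'm: "m x = 0" if x: "x \<in> ?X'" for x
  proof -
    have xX: "x \<in> ?X" using x XX' by blast
    have "supp x \<in> K'" using real_D[OF K' x] by blast
    then have "supp x \<noteq> s" "supp x \<noteq> p" using KK' by auto
    then have "\<not> m x > 0" using supp_sp[OF xX] by blast
    then show ?thesis using m_nn[OF xX] by simp
  qed
  have zero_X': "x \<in> ?X'" if x: "x \<in> ?X" and m0: "m x = 0" for x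
  proof -
    obtain v0 where v0: "v0 \<in> s" "x v0 = 0" using m_in[of x] m0 by auto
    have "supp x \<in> K" "\<forall>v. 0 \<le> x v" "sum x (supp x) = 1" using real_D[OF K x] by auto
    moreover have "supp x \<noteq> s" "supp x \<noteq> p" using v0 sp unfolding supp_def by auto
    ultimately show ?thesis using KK' by (intro real_I) auto
  qed
  have pos_case: "h (x, t) \<in> ?X \<and> (\<forall>v. v \<notin> p \<longrightarrow> h (x, t) v = 0) \<and> (t = 1 \<longrightarrow> h (x, t) \<in> ?X') \<and> (0 < t \<longrightarrow> p - s \<subseteq> supp (h (x, t)))"
    if x: "x \<in> ?X" and mp: "m x > 0" and t: "0 \<le> t" "t \<le> 1" for x t
  proof -
    let ?y = "h (x, t)"
    have xnn: "\<forall>v. 0 \<le> x v" and xs1: "sum x (supp x) = 1" using real_D[OF K x] by auto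
    have sx: "supp x \<subseteq> p" using supp_p[OF x mp] .
    have xout: "x v = 0" if "v \<notin> p" for v using sx that unfolding supp_def by auto
    have ynn: "0 \<le> ?y v" for v
    proof (cases "v \<in> s")
      case True
      have "t * m x \<le> 1 * m x" using t mp by (intro mult_right_mono) auto
      then show ?thesis using True m_le[OF True, of x] by (simp add: h_def)
    next
      case False
      then show ?thesis using xnn c_pos mp t by (simp add: h_def)
    qed
    have yout: "\<forall>v. v \<notin> p \<longrightarrow> ?y v = 0" using xout sp by (auto simp: h_def)
    have sxp: "sum x p = 1" using xs1 sum.mono_neutral_left[OF fp sx, of x] by (simp add: supp_def)
    have ss: "sum ?y s = sum x s - real (card s) * (t * m x)"
      by (simp add: h_def sum_subtractf)
    have sps: "sum ?y (p - s) = sum x (p - s) + real (card (p - s)) * (t * c * m x)"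
      by (simp add: h_def sum.distrib)
    have ysum: "sum ?y p = 1"
    proof -
      have "sum ?y p = sum ?y (p - s) + sum ?y s" using sum.subset_diff[of s p ?y] sp fp by auto
      also have "\<dots> = sum x (p - s) + sum x s"
      proof -
        have "real (card (p - s)) * (t * c * m x) = t * m x * (real (card (p - s)) * c)"
          by (simp only: mult_ac)
        also have "\<dots> = real (card s) * (t * m x)" using c_card by simp
        finally show ?thesis unfolding ss sps by simp
      qed
      also have "\<dots> = sum x p" using sum.subset_diff[of s p x] sp fp by auto
      finally show ?thesis using sxp by simp
    qed
    have yX: "?y \<in> ?X" unfolding realization_def using pK ynn yout ysum by blast
    have supp_y: "supp ?y \<subseteq> p" using yout unfolding supp_def by auto
    have ysupp_sum: "sum ?y (supp ?y) = 1"
      using ysum sum.mono_neutral_left[OF fp supp_y, of ?y] by (simp add: supp_def)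
    have y1: "?y \<in> ?X'" if t1: "t = 1"
    proof -
      obtain v0 where v0: "v0 \<in> s" "x v0 = m x" using m_in[of x] by auto
      have "?y v0 = 0" using v0 t1 by (simp add: h_def)
      then have ne: "supp ?y \<noteq> s" "supp ?y \<noteq> p" using v0 sp unfolding supp_def by auto
      have "supp ?y \<noteq> {}" using ysupp_sum by auto
      then have "supp ?y \<in> K" using K pK supp_y unfolding simplicial_complex_def by blast
      then show ?thesis using ne KK' ynn ysupp_sum by (intro real_I) auto
    qed
    have ps: "p - s \<subseteq> supp ?y" if "0 < t"
    proof
      fix v assume v: "v \<in> p - s"
      have "0 < t * c * m x" using that c_pos mp by simp
      then have "?y v > 0" using v xnn[rule_format, of v] by (simp add: h_def)
      then show "v \<in> supp ?y" unfolding supp_def by auto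
    qed
    show ?thesis using yX yout y1 ps by blast
  qed
  have hX: "h (x, t) \<in> ?X" if x: "x \<in> ?X" and t: "0 \<le> t" "t \<le> 1" for x t
  proof (cases "m x = 0")
    case True then show ?thesis using hz x by simp
  next
    case False then have "m x > 0" using m_nn[OF x] by simp
    then show ?thesis using pos_case[OF x _ t] by blast
  qed
  have h1X': "h (x, 1) \<in> ?X'" if x: "x \<in> ?X" for x
  proof (cases "m x = 0")
    case True then show ?thesis using hz zero_X' x by simp
  next
    case False then have "m x > 0" using m_nn[OF x] by simp
    then show ?thesis using pos_case[OF x, of 1] by simp
  qed
  have strat: "h (x, t) \<in> ?S \<longleftrightarrow> x \<in> ?S" if x: "x \<in> ?X" and t: "0 \<le> t" "t \<le> 1" for x t
  proof (cases "m x = 0")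
    case True then show ?thesis using hz by simp
  next
    case False then have mp: "m x > 0" using m_nn[OF x] by simp
    have P: "h (x, t) \<in> ?X" "\<forall>v. v \<notin> p \<longrightarrow> h (x, t) v = 0" "0 < t \<longrightarrow> p - s \<subseteq> supp (h (x, t))"
      using pos_case[OF x mp t] by blast+
    have sy: "supp (h (x, t)) \<subseteq> p" using P(2) unfolding supp_def by auto
    have "supp (h (x, t)) \<subseteq> S00 \<longleftrightarrow> supp x \<subseteq> S00"
    proof (cases "p \<subseteq> S00")
      case True then show ?thesis using sy supp_p[OF x mp] by blast
    next
      case False
      then have c2: "\<not> s \<subseteq> S00" "\<not> (p - s) \<subseteq> S00" using cond by auto
      have "s \<subseteq> supp x" using supp_sp[OF x mp] sp by auto
      then have nx: "\<not> supp x \<subseteq> S00" using c2 by blast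
      show ?thesis
      proof (cases "t = 0")
        case True then show ?thesis using h0 by simp
      next
        case False then have "0 < t" using t by simp
        then have "\<not> supp (h (x, t)) \<subseteq> S00" using P(3) c2 by blast
        then show ?thesis using nx by blast
      qed
    qed
    then show ?thesis using real_S_part[OF K] P(1) x by blast
  qed
  have SS': "x \<in> ?S' \<longleftrightarrow> x \<in> ?X' \<and> x \<in> ?S" for x
  proof
    assume x: "x \<in> ?S'"
    have d: "\<forall>v. 0 \<le> x v" "supp x \<in> S'" "sum x (supp x) = 1" using real_D[OF S'sc x] by auto
    then have "supp x \<in> K'" "supp x \<subseteq> S00" using S'K' S'eq by auto
    then have "x \<in> ?X'" using d by (intro real_I) auto
    moreover have "x \<in> ?S" using \<open>supp x \<subseteq> S00\<close> real_S_part[OF K] XX' calculation by blast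
    ultimately show "x \<in> ?X' \<and> x \<in> ?S" by blast
  next
    assume x: "x \<in> ?X' \<and> x \<in> ?S"
    have d: "\<forall>v. 0 \<le> x v" "supp x \<in> K'" "sum x (supp x) = 1" using real_D[OF K'] x by auto
    have "supp x \<subseteq> S00" using real_S_part[OF K] x by blast
    then have "supp x \<in> S'" using S'eq d(2) by blast
    then show "x \<in> ?S'" using d by (intro real_I) auto
  qed
  have mc: "continuous_on UNIV m"
    unfolding m_def using continuous_on_Min_fun[of s UNIV "\<lambda>x v. x v"] fs sne by simp
  have mfc: "continuous_on UNIV (\<lambda>z::('v\<Rightarrow>real)\<times>real. m (fst z))"
    by (rule continuous_on_compose2[OF mc continuous_on_fst[OF continuous_on_id]]) auto
  have cc: "continuous_on UNIV (\<lambda>z::('v\<Rightarrow>real)\<times>real. fst z v)" for v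
    by (rule continuous_on_compose2[OF continuous_on_product_coordinates continuous_on_fst[OF continuous_on_id]]) auto
  have hc: "continuous_on UNIV h"
  proof (rule continuous_on_coordinatewise_then_product)
    fix v
    have eq: "(\<lambda>z. h z v) = (\<lambda>z. if v \<in> s then fst z v - snd z * m (fst z) else if v \<in> p then fst z v + snd z * c * m (fst z) else fst z v)"
      by (auto simp: h_def)
    have sn: "continuous_on UNIV (\<lambda>z::('v\<Rightarrow>real)\<times>real. snd z)" by (rule continuous_on_snd[OF continuous_on_id])
    show "continuous_on UNIV (\<lambda>z. h z v)" unfolding eq
      by (cases "v \<in> s"; cases "v \<in> p"; simp only: if_True if_False;
          intro continuous_on_diff continuous_on_add continuous_on_mult cc sn mfc continuous_on_const)
  qed
  define f where "f = (\<lambda>x. h (x, 1))"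
  have fc: "continuous_on UNIV f"
    unfolding f_def by (rule continuous_on_compose2[OF hc]) (auto intro!: continuous_intros)
  have fid: "f x = x" if "x \<in> ?X'" for x using X'm[OF that] hz by (simp add: f_def)
  have SX: "?S \<subseteq> ?X" by (rule real_mono) (auto simp: S_part_def)
  have SX': "?S' \<subseteq> ?X'" by (rule real_mono[OF S'K'])
  have m1: "stratified_map ?X ?S ?X' ?S' f"
    unfolding stratified_map_def
  proof (intro conjI)
    show "continuous_on ?X f" using fc by (rule continuous_on_subset) simp
    show "f ` ?X \<subseteq> ?X'" using h1X' by (auto simp: f_def)
    show "f ` ?S \<subseteq> ?S'" using h1X' strat[of _ 1] SX SS' by (auto simp: f_def)
    show "f ` (?X - ?S) \<subseteq> ?X' - ?S'" using h1X' strat[of _ 1] SS' by (auto simp: f_def)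
  qed
  have m2: "stratified_map ?X' ?S' ?X ?S id"
    unfolding stratified_map_def using XX' SS' by (auto intro: continuous_on_id)
  define H where "H = (\<lambda>(x::'v\<Rightarrow>real, t::real). h (x, 1 - t))"
  have Hc: "continuous_on UNIV H"
  proof -
    have "H = h \<circ> (\<lambda>z. (fst z, 1 - snd z))" by (auto simp: H_def)
    moreover have "continuous_on UNIV (\<lambda>z::('v\<Rightarrow>real)\<times>real. (fst z, 1 - snd z))"
      by (intro continuous_intros)
    ultimately show ?thesis using continuous_on_compose[OF _ continuous_on_subset[OF hc]] by simp
  qed
  have m3: "stratified_homotopic ?X ?S ?X ?S (id \<circ> f) id"
    unfolding stratified_homotopic_def
  proof (rule exI[of _ H], intro conjI)
    show "stratified_map (?X \<times> {0..1}) (?S \<times> {0..1}) ?X ?S H"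
      unfolding stratified_map_def
    proof (intro conjI)
      show "continuous_on (?X \<times> {0..1}) H" using Hc by (rule continuous_on_subset) simp
      show "H ` (?X \<times> {0..1}) \<subseteq> ?X" using hX by (auto simp: H_def)
      show "H ` (?S \<times> {0..1}) \<subseteq> ?S" using strat SX by (auto simp: H_def)
      show "H ` (?X \<times> {0..1} - ?S \<times> {0..1}) \<subseteq> ?X - ?S" using strat hX by (auto simp: H_def)
    qed
    show "\<forall>x\<in>?X. H (x, 0) = (id \<circ> f) x \<and> H (x, 1) = id x" by (simp add: H_def f_def h0)
  qed
  have m4: "stratified_homotopic ?X' ?S' ?X' ?S' (f \<circ> id) id"
    unfolding stratified_homotopic_def
  proof (rule exI[of _ fst], intro conjI)
    show "stratified_map (?X' \<times> {0..1}) (?S' \<times> {0..1}) ?X' ?S' fst"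
      unfolding stratified_map_def by (auto intro: continuous_on_fst continuous_on_id)
    show "\<forall>x\<in>?X'. fst (x, 0::real) = (f \<circ> id) x \<and> fst (x, 1::real) = id x" using fid by simp
  qed
  show ?thesis unfolding SHE_def using SX SX' m1 m2 m3 m4 by blast
qed

lemma SHE_refl:
  fixes X :: "'a::topological_space set"
  assumes "SX \<subseteq> X" shows "SHE X SX X SX"
proof -
  have m: "stratified_map X SX X SX id" unfolding stratified_map_def using assms by (auto intro: continuous_on_id)
  have h: "stratified_homotopic X SX X SX (id \<circ> id) id"
    unfolding stratified_homotopic_def
  proof (rule exI[of _ fst], intro conjI)
    show "stratified_map (X \<times> {0..1}) (SX \<times> {0..1}) X SX fst"
      unfolding stratified_map_def by (auto intro: continuous_on_fst continuous_on_id)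
    show "\<forall>x\<in>X. fst (x, 0::real) = (id \<circ> id) x \<and> fst (x, 1::real) = id x" by simp
  qed
  show ?thesis unfolding SHE_def using assms m h by blast
qed

definition XL :: "'v layered \<Rightarrow> ('v \<Rightarrow> real) set" where "XL L = realization (fst L)"
definition SL :: "'v layered \<Rightarrow> ('v \<Rightarrow> real) set" where "SL L = realization (snd (snd L))"

lemma free_unique:
  assumes "free_simplex K s" "p \<in> K" "s \<subset> p"
  shows "\<forall>q\<in>K. s \<subset> q \<longrightarrow> q = p" "s \<in> K"
  using assms unfolding free_simplex_def by blast+

lemma layer_step:
  assumes "elem_layered_collapse L L'"
  shows "SHE (XL L) (SL L) (XL L') (SL L')"
proof -
  obtain K S0 where d: "divided K S0" and L: "L = (K, C_part K S0, S_part K S0)"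
    using assms unfolding elem_layered_collapse_def is_assoc_layered_def assoc_layered_def by blast
  obtain K1 S1 where d1: "divided K1 S1" and L': "L' = (K1, C_part K1 S1, S_part K1 S1)"
    using assms unfolding elem_layered_collapse_def is_assoc_layered_def assoc_layered_def by blast
  have K: "simplicial_complex K" and K1: "simplicial_complex K1" using d d1 unfolding divided_def by auto
  have XL: "XL L = realization K" "SL L = realization (S_part K S0)" using L by (auto simp: XL_def SL_def)
  have XL': "XL L' = realization K1" "SL L' = realization (S_part K1 S1)" using L' by (auto simp: XL_def SL_def)
  have S1sc: "simplicial_complex (S_part K1 S1)" by (rule sc_S_part[OF K1])
  have S1K1: "S_part K1 S1 \<subseteq> K1" by (auto simp: S_part_def)
  have ne: "\<And>q. q \<in> K \<Longrightarrow> q \<noteq> {}" using K unfolding simplicial_complex_def by blast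
  have sub: "\<And>q r. q \<in> K \<Longrightarrow> r \<subseteq> q \<Longrightarrow> r \<noteq> {} \<Longrightarrow> r \<in> K" using K unfolding simplicial_complex_def by blast
  consider (S) "elem_S_collapse L L'" | (C) "elem_C_collapse L L'" | (I) "elem_intermediate_collapse L L'"
    using assms unfolding elem_layered_collapse_def by blast
  then show ?thesis
  proof cases
    case S
    then obtain s p where sp: "p \<in> S_part K S0" "principal K p" "s \<subset> p" "free_simplex K s"
      and eq: "L' = (K - {s, p}, C_part K S0, S_part K S0 - {s, p})"
      using L unfolding elem_S_collapse_def by auto
    have K1eq: "K1 = K - {s,p}" and S1eq: "S_part K1 S1 = S_part K S0 - {s,p}" using eq L' by auto
    have pK: "p \<in> K" using sp(1) by (simp add: S_part_def)
    note fr = free_unique[OF sp(4) pK sp(3)]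
    have S'eq: "\<forall>q\<in>K1. q \<in> S_part K1 S1 \<longleftrightarrow> q \<subseteq> S0" unfolding S1eq unfolding K1eq by (auto simp: S_part_def)
    have cond: "p \<subseteq> S0 \<or> (\<not> s \<subseteq> S0 \<and> \<not> (p - s) \<subseteq> S0)" using sp(1) by (simp add: S_part_def)
    show ?thesis unfolding XL XL'
      by (rule collapse_SHE[OF K K1 K1eq pK sp(3) fr(1) fr(2) S1sc S1K1 S'eq cond])
  next
    case C
    then obtain s p where sp: "p \<in> C_part K S0" "principal K p" "s \<subset> p" "free_simplex K s"
      and eq: "L' = (K - {s, p}, C_part K S0 - {s, p}, S_part K S0)"
      using L unfolding elem_C_collapse_def by auto
    have K1eq: "K1 = K - {s,p}" and S1eq: "S_part K1 S1 = S_part K S0" using eq L' by auto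
    have pK: "p \<in> K" using sp(1) by (simp add: C_part_def)
    note fr = free_unique[OF sp(4) pK sp(3)]
    have S'eq: "\<forall>q\<in>K1. q \<in> S_part K1 S1 \<longleftrightarrow> q \<subseteq> S0" unfolding S1eq unfolding K1eq by (auto simp: S_part_def)
    have pd: "p \<inter> S0 = {}" using sp(1) by (auto simp: C_part_def)
    have "s \<noteq> {}" using ne[OF fr(2)] .
    then have c1: "\<not> s \<subseteq> S0" using pd sp(3) by blast
    have "p - s \<noteq> {}" using sp(3) by blast
    then have c2: "\<not> (p - s) \<subseteq> S0" using pd by blast
    show ?thesis unfolding XL XL'
      by (rule collapse_SHE[OF K K1 K1eq pK sp(3) fr(1) fr(2) S1sc S1K1 S'eq]) (use c1 c2 in blast)
  next
    case I
    then obtain s p where sp: "p \<in> K" "p \<notin> S_part K S0" "principal K p" "s \<subset> p" "free_simplex K s"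
      and tS: "\<forall>t\<in>S_part K S0. t \<subset> p \<longrightarrow> t \<subset> s"
      and eq: "L' = (K - {s, p}, C_part K S0, S_part K S0)"
      using L unfolding elem_intermediate_collapse_def by auto
    have K1eq: "K1 = K - {s,p}" and S1eq: "S_part K1 S1 = S_part K S0" using eq L' by auto
    note fr = free_unique[OF sp(5) sp(1) sp(4)]
    have S'eq: "\<forall>q\<in>K1. q \<in> S_part K1 S1 \<longleftrightarrow> q \<subseteq> S0" unfolding S1eq unfolding K1eq by (auto simp: S_part_def)
    have c1: "\<not> s \<subseteq> S0"
    proof
      assume "s \<subseteq> S0"
      then have "s \<in> S_part K S0" using fr(2) by (simp add: S_part_def)
      then show False using tS sp(4) by blast
    qed
    have c2: "\<not> (p - s) \<subseteq> S0"
    proof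
      assume a: "p - s \<subseteq> S0"
      have pne: "p - s \<noteq> {}" using sp(4) by blast
      have "p - s \<in> K" using sub[OF sp(1) _ pne] by blast
      then have "p - s \<in> S_part K S0" using a by (simp add: S_part_def)
      moreover have "p - s \<subset> p" using ne[OF fr(2)] sp(4) by blast
      ultimately have "p - s \<subset> s" using tS by blast
      then show False using pne by blast
    qed
    show ?thesis unfolding XL XL'
      by (rule collapse_SHE[OF K K1 K1eq sp(1) sp(4) fr(1) fr(2) S1sc S1K1 S'eq]) (use c1 c2 in blast)
  qed
qed

lemma chain_SHE:
  assumes "layered_formal_deformation L L'" "\<exists>K S0. divided K S0 \<and> L = assoc_layered K S0"
  shows "SHE (XL L) (SL L) (XL L') (SL L')"
proof -
  obtain xs where xs: "xs \<noteq> []" "hd xs = L" "last xs = L'"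
    and st: "\<forall>i. Suc i < length xs \<longrightarrow> elem_layered_collapse (xs ! i) (xs ! Suc i) \<or> elem_layered_collapse (xs ! Suc i) (xs ! i)"
    using assms(1) unfolding layered_formal_deformation_def by blast
  have SX: "SL L \<subseteq> XL L" using assms(2) unfolding SL_def XL_def assoc_layered_def
    by (auto intro!: real_mono simp: S_part_def)
  have "i < length xs \<Longrightarrow> SHE (XL L) (SL L) (XL (xs ! i)) (SL (xs ! i))" for i
  proof (induction i)
    case 0
    then show ?case using xs(1,2) SHE_refl[OF SX] by (simp add: hd_conv_nth)
  next
    case (Suc i)
    then have IH: "SHE (XL L) (SL L) (XL (xs ! i)) (SL (xs ! i))" by simp
    have "SHE (XL (xs ! i)) (SL (xs ! i)) (XL (xs ! Suc i)) (SL (xs ! Suc i))"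
      using st Suc.prems layer_step SHE_sym by blast
    then show ?case using SHE_trans[OF IH] by blast
  qed
  from this[of "length xs - 1"] show ?thesis using xs(1,3) by (simp add: last_conv_nth)
qed

theorem theorem6p2:
  fixes K K' :: "'v set set" and S0 S0' :: "'v set" and n n' k k' :: int
  assumes "divided K S0" and "divided K' S0'"
    and "filtered_space (realization K) (realization (S_part K S0)) n k"
    and "filtered_space (realization K') (realization (S_part K' S0')) n' k'"
    and "k = k'"
    and "layered_formal_deformation (assoc_layered K S0) (assoc_layered K' S0')"
  shows "stratified_homotopy_equivalent
           (realization K) (realization (S_part K S0)) k
           (realization K') (realization (S_part K' S0')) k'"
proof -
  have "SHE (XL (assoc_layered K S0)) (SL (assoc_layered K S0)) (XL (assoc_layered K' S0')) (SL (assoc_layered K' S0'))"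
    using chain_SHE[OF assms(6)] assms(1) by blast
  then have "SHE (realization K) (realization (S_part K S0)) (realization K') (realization (S_part K' S0'))"
    by (simp add: XL_def SL_def assoc_layered_def)
  then show ?thesis
    unfolding SHE_def stratified_homotopy_equivalent_def stratified_homotopy_equivalence_def
    using assms(5) by blast
qed

end
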